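(* Let $\mathit{Winner}$ be a unary predicate symbol in $\Phi$, and let $\mathit{Lottery}$ be the sentence $\forall x(\mathit{true}\hookrightarrow\neg\mathit{Winner}(x))\land(\mathit{true}\hookrightarrow\exists x\,\mathit{Winner}(x))$ and $\mathit{Crooked}$ the sentence $\exists y\forall x\,(x\ne y\Rightarrow((\mathit{Winner}(x)\lor\mathit{Winner}(y))\hookrightarrow\mathit{Winner}(y)))$. Let $PL=(\mathit{Dom},W,\mathrm{Pl},\pi)$ be a subjective plausibility structure whose plausibility measure is defined on all subsets of $W$, is qualitative (satisfies A2 and A3), and satisfies A2$^\dagger$ and A3$^*$. Then $\mathit{Lottery}\land\mathit{Crooked}\Rightarrow(\mathit{true}\hookrightarrow\mathit{false})$ holds at every world of $PL$.
   Context: The language $\mathcal{L}^{subj}(\Phi)$ over a first-order vocabulary $\Phi$ is the least set containing the atomic first-order formulas (including equalities) and closed under $\neg,\land,\lor,\Rightarrow$, $\forall x$, $\exists x$, and a binary conditional connective $\hookrightarrow$. $\mathit{true},\mathit{false}$ are a fixed tautology and its negation. A plausibility measure on $W$ is $\mathrm{Pl}:2^W\to D$, $(D,\le)$ a partial order with least element $\bot$ and greatest $\top$, $\mathrm{Pl}(W)=\top$, $\mathrm{Pl}(\emptyset)=\bot$, and $A\subseteq B\Rightarrow\mathrm{Pl}(A)\le\mathrm{Pl}(B)$; $d<d'$ means $d\le d'$ and $d\ne d'$. A subjective plausibility structure is $(\mathit{Dom},W,\mathrm{Pl},\pi)$ with $\mathit{Dom}$ a nonempty set and $\pi(w)$ an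 interpretation of $\Phi$ over $\mathit{Dom}$ for each $w\in W$. Valuations map variables to $\mathit{Dom}$; $v\sim_x v'$ means they agree except possibly on $x$. Satisfaction at $(w,v)$ is as in first-order logic in $(\mathit{Dom},\pi(w))$ for atomic formulas and Boolean connectives; $\forall x\phi$ holds at $(w,v)$ iff $\phi$ holds at $(w,v')$ for all $v'\sim_x v$; $\phi\hookrightarrow\psi$ holds at $(w,v)$ iff $\mathrm{Pl}([\![\phi]\!]_v)=\bot$ or $\mathrm{Pl}([\![\phi\land\psi]\!]_v)>\mathrm{Pl}([\![\phi\land\neg\psi]\!]_v)$, where $[\![\phi]\!]_v=\{w\in W:\phi\text{ holds at }(w,v)\}$. A2: for pairwise disjoint $A,B,C$, if $\mathrm{Pl}(A\cup B)>\mathrm{Pl}(C)$ and $\mathrm{Pl}(A\cup C)>\mathrm{Pl}(B)$ then $\mathrm{Pl}(A)>\mathrm{Pl}(B\cup C)$. A3: $\mathrm{Pl}(A)=\mathrm{Pl}(B)=\bot$ implies $\mathrm{Pl}(A\cup B)=\bot$. A2$^\dagger$: whenever $\{A_i:i\in I\}$ are pairwise disjoint subsets of $W$ with $0\in I$, $A=\bigcup_{i\in I}A_i$, and $\mathrm{Pl}(A_0)>\mathrm{Pl}(A_i)$ for all $i\in I\setminus\{0\}$, then not $\mathrm{Pl}(A_0)<\mathrm{Pl}(A\setminus A_0)$. A3$^*$: for every family $\{A_i:i\in I\}$ of subsets of $W$ with $\mathrm{Pl}(A_i)=\bot$ for all $i$, $\mathrm{Pl}(\bigcup_iA_i)=\bot$.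 *)

theory Defs
  imports Main
begin

text \<open>Vocabulary Phi: function symbols of type 'f, predicate symbols of type 'p
 (arities are not tracked; symbols are applied to argument lists).
 Variables are natural numbers.\<close>

datatype 'f trm = Var nat | Fn 'f "'f trm list"

datatype ('f, 'p) fm =
    Atom 'p "'f trm list"
  | Eq "'f trm" "'f trm"
  | Neg "('f, 'p) fm"
  | Conj "('f, 'p) fm" "('f, 'p) fm"
  | Disj "('f, 'p) fm" "('f, 'p) fm"
  | Imp "('f, 'p) fm" "('f, 'p) fm"
  | All nat "('f, 'p) fm"
  | Ex nat "('f, 'p) fm"
  | Cond "('f, 'p) fm" "('f, 'p) fm"

definition fTrue :: "('f, 'p) fm" where "fTrue = Eq (Var 0) (Var 0)"
definition fFalse :: "('f, 'p) fm" where "fFalse = Neg fTrue"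

text \<open>A subjective plausibility structure (Dom, W, Pl, pi) is represented with
 Dom = UNIV :: 'd set, W = UNIV :: 'w set, Pl :: 'w set => 'v, and pi given by
 its function part FI and predicate part PI (both depending on the world).\<close>

fun eval_trm :: "('w \<Rightarrow> 'f \<Rightarrow> 'd list \<Rightarrow> 'd) \<Rightarrow> 'w \<Rightarrow> (nat \<Rightarrow> 'd) \<Rightarrow> 'f trm \<Rightarrow> 'd" where
  "eval_trm FI w v (Var x) = v x"
| "eval_trm FI w v (Fn f ts) = FI w f (map (eval_trm FI w v) ts)"

fun holds :: "('w set \<Rightarrow> 'v::{order_bot,order_top}) \<Rightarrow> ('w \<Rightarrow> 'f \<Rightarrow> 'd list \<Rightarrow> 'd) \<Rightarrow> ('w \<Rightarrow> 'p \<Rightarrow> 'd list \<Rightarrow> bool)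
              \<Rightarrow> 'w \<Rightarrow> (nat \<Rightarrow> 'd) \<Rightarrow> ('f, 'p) fm \<Rightarrow> bool" where
  "holds Pl FI PI w v (Atom P ts) = PI w P (map (eval_trm FI w v) ts)"
| "holds Pl FI PI w v (Eq s t) = (eval_trm FI w v s = eval_trm FI w v t)"
| "holds Pl FI PI w v (Neg \<phi>) = (\<not> holds Pl FI PI w v \<phi>)"
| "holds Pl FI PI w v (Conj \<phi> \<psi>) = (holds Pl FI PI w v \<phi> \<and> holds Pl FI PI w v \<psi>)"
| "holds Pl FI PI w v (Disj \<phi> \<psi>) = (holds Pl FI PI w v \<phi> \<or> holds Pl FI PI w v \<psi>)"
| "holds Pl FI PI w v (Imp \<phi> \<psi>) = (holds Pl FI PI w v \<phi> \<longrightarrow> holds Pl FI PI w v \<psi>)"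
| "holds Pl FI PI w v (All x \<phi>) = (\<forall>d. holds Pl FI PI w (v(x := d)) \<phi>)"
| "holds Pl FI PI w v (Ex x \<phi>) = (\<exists>d. holds Pl FI PI w (v(x := d)) \<phi>)"
| "holds Pl FI PI w v (Cond \<phi> \<psi>) =
     (Pl {u. holds Pl FI PI u v \<phi>} = bot
      \<or> Pl {u. holds Pl FI PI u v \<phi> \<and> holds Pl FI PI u v \<psi>}
          > Pl {u. holds Pl FI PI u v \<phi> \<and> \<not> holds Pl FI PI u v \<psi>})"

definition plausibility_measure :: "('w set \<Rightarrow> 'v::{order_bot,order_top}) \<Rightarrow> bool" where
  "plausibility_measure Pl \<longleftrightarrow> Pl UNIV = top \<and> Pl {} = bot \<and> (\<forall>A B. A \<subseteq> B \<longrightarrow> Pl A \<le> Pl B)"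

definition A2 :: "('w set \<Rightarrow> 'v::order) \<Rightarrow> bool" where
  "A2 Pl \<longleftrightarrow> (\<forall>A B C. A \<inter> B = {} \<and> A \<inter> C = {} \<and> B \<inter> C = {} \<longrightarrow>
      Pl (A \<union> B) > Pl C \<longrightarrow> Pl (A \<union> C) > Pl B \<longrightarrow> Pl A > Pl (B \<union> C))"

definition A3 :: "('w set \<Rightarrow> 'v::order_bot) \<Rightarrow> bool" where
  "A3 Pl \<longleftrightarrow> (\<forall>A B. Pl A = bot \<longrightarrow> Pl B = bot \<longrightarrow> Pl (A \<union> B) = bot)"

definition qualitative :: "('w set \<Rightarrow> 'v::order_bot) \<Rightarrow> bool" where
  "qualitative Pl \<longleftrightarrow> A2 Pl \<and> A3 Pl"

text \<open>A2-dagger, for families indexed by a set I of indices of type 'w set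
 (any family of pairwise disjoint subsets of W can be so reindexed, e.g. by i -> A i,
 without changing the hypotheses or the conclusion).\<close>
definition A2dagger :: "('w set \<Rightarrow> 'v::order) \<Rightarrow> bool" where
  "A2dagger Pl \<longleftrightarrow> (\<forall>(I :: 'w set set) (A :: 'w set \<Rightarrow> 'w set) i0.
      i0 \<in> I \<longrightarrow> (\<forall>i\<in>I. \<forall>j\<in>I. i \<noteq> j \<longrightarrow> A i \<inter> A j = {}) \<longrightarrow>
      (\<forall>i\<in>I - {i0}. Pl (A i0) > Pl (A i)) \<longrightarrow>
      \<not> (Pl (A i0) < Pl ((\<Union>i\<in>I. A i) - A i0)))"

text \<open>A3-star, for arbitrary families of subsets of W (indexed by themselves).\<close>
definition A3star :: "('w set \<Rightarrow> 'v::order_bot) \<Rightarrow> bool" where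
  "A3star Pl \<longleftrightarrow> (\<forall>F :: 'w set set. (\<forall>A\<in>F. Pl A = bot) \<longrightarrow> Pl (\<Union>F) = bot)"

section \<open>The sentences Lottery and Crooked (x = variable 0, y = variable 1)\<close>

definition Lottery :: "'p \<Rightarrow> ('f, 'p) fm" where
  "Lottery Winner = Conj (All 0 (Cond fTrue (Neg (Atom Winner [Var 0]))))
                         (Cond fTrue (Ex 0 (Atom Winner [Var 0])))"

definition Crooked :: "'p \<Rightarrow> ('f, 'p) fm" where
  "Crooked Winner = Ex 1 (All 0 (Imp (Neg (Eq (Var 0) (Var 1)))
      (Cond (Disj (Atom Winner [Var 0]) (Atom Winner [Var 1])) (Atom Winner [Var 1]))))"

end

theory Submission
  imports Defs
begin

lemma core:
  fixes Pl :: "'w set \<Rightarrow> 'v::{order_bot,order_top}"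
    and Wn :: "'d \<Rightarrow> 'w set"
  assumes pm: "plausibility_measure Pl"
    and q: "qualitative Pl"
    and d2: "A2dagger Pl"
    and d3: "A3star Pl"
    and L1: "\<forall>d. Pl (- Wn d) > Pl (Wn d)"
    and L2: "Pl (\<Union>d. Wn d) > Pl (- (\<Union>d. Wn d))"
    and C: "\<forall>d. d \<noteq> c \<longrightarrow> (Pl (Wn d \<union> Wn c) = bot \<or> Pl (Wn c) > Pl (Wn d - Wn c))"
  shows False
proof -
  define E where "E = (\<Union>d. Wn d)"
  have mono: "\<And>A B. A \<subseteq> B \<Longrightarrow> Pl A \<le> Pl B" using pm unfolding plausibility_measure_def by blast
  have A2: "A2 Pl" using q unfolding qualitative_def by blast
  show False
  proof (cases "Pl (Wn c) = bot")
    case True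
    have "\<forall>A\<in>range Wn. Pl A = bot"
    proof
      fix A assume "A \<in> range Wn"
      then obtain d where d: "A = Wn d" by blast
      show "Pl A = bot"
      proof (cases "d = c")
        case True thus ?thesis using d \<open>Pl (Wn c) = bot\<close> by simp
      next
        case False
        then have "Pl (Wn d \<union> Wn c) = bot \<or> Pl (Wn c) > Pl (Wn d - Wn c)" using C by blast
        moreover have "\<not> Pl (Wn c) > Pl (Wn d - Wn c)" using \<open>Pl (Wn c) = bot\<close> by simp
        ultimately have "Pl (Wn d \<union> Wn c) = bot" by blast
        moreover have "Pl (Wn d) \<le> Pl (Wn d \<union> Wn c)" by (rule mono) blast
        ultimately show ?thesis using d by (simp add: bot_unique)
      qed
    qed
    then have "Pl (\<Union>(range Wn)) = bot" using d3 unfolding A3star_def by blast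
    then show False using L2 by simp
  next
    case False
    then have pos: "Pl (Wn c) > bot" by (simp add: bot_less)
    define ch where "ch u = (SOME d. u \<in> Wn d)" for u
    have ch: "u \<in> E \<Longrightarrow> u \<in> Wn (ch u)" for u unfolding ch_def E_def by (rule someI_ex) blast
    define P where "P d = {u \<in> E - Wn c. ch u = d}" for d
    define I where "I = insert (Wn c) {P d | d. d \<noteq> c}"
    have Psub: "P d \<subseteq> Wn d - Wn c" for d using ch unfolding P_def by blast
    have Pless: "Pl (P d) < Pl (Wn c)" if "d \<noteq> c" for d
    proof -
      from C that have "Pl (Wn d \<union> Wn c) = bot \<or> Pl (Wn c) > Pl (Wn d - Wn c)" by blast
      then show ?thesis
      proof
        assume "Pl (Wn d \<union> Wn c) = bot"
        moreover have "Pl (P d) \<le> Pl (Wn d \<union> Wn c)" using Psub by (intro mono) blast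
        ultimately show ?thesis using pos by (simp add: bot_unique)
      next
        assume "Pl (Wn c) > Pl (Wn d - Wn c)"
        moreover have "Pl (P d) \<le> Pl (Wn d - Wn c)" using Psub by (intro mono)
        ultimately show ?thesis by (rule le_less_trans[rotated])
      qed
    qed
    have Wne: "Wn c \<noteq> {}" using pos pm unfolding plausibility_measure_def by auto
    have disj: "\<forall>i\<in>I. \<forall>j\<in>I. i \<noteq> j \<longrightarrow> id i \<inter> id j = {}"
      unfolding I_def P_def by auto
    have lt: "\<forall>i\<in>I - {Wn c}. Pl (id (Wn c)) > Pl (id i)"
      unfolding I_def using Pless by auto
    have i0: "Wn c \<in> I" unfolding I_def by blast
    have "\<not> (Pl (id (Wn c)) < Pl ((\<Union>i\<in>I. id i) - id (Wn c)))"
      using d2[unfolded A2dagger_def, THEN spec[of _ I], THEN spec[of _ id], THEN spec[of _ "Wn c"]] i0 disj lt by blast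
    moreover have "(\<Union>i\<in>I. id i) - id (Wn c) = E - Wn c"
    proof -
      have "(\<Union>d\<in>{d. d \<noteq> c}. P d) = E - Wn c"
        unfolding P_def using ch by auto
      then show ?thesis unfolding I_def by auto
    qed
    ultimately have nlt: "\<not> Pl (Wn c) < Pl (E - Wn c)" by simp
    have "Pl (E - Wn c) > Pl (Wn c \<union> - E)"
    proof -
      have s1: "(E - Wn c) \<union> Wn c = E" unfolding E_def by blast
      have s2: "(E - Wn c) \<union> - E = - Wn c" unfolding E_def by blast
      have "Pl ((E - Wn c) \<union> Wn c) > Pl (- E)" using L2 s1 E_def by simp
      moreover have "Pl ((E - Wn c) \<union> - E) > Pl (Wn c)" using L1 s2 by simp
      moreover have dis: "(E - Wn c) \<inter> Wn c = {} \<and> (E - Wn c) \<inter> - E = {} \<and> Wn c \<inter> - E = {}"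
        unfolding E_def by blast
      ultimately show ?thesis using A2[unfolded A2_def, rule_format, OF dis] by blast
    qed
    moreover have "Pl (Wn c) \<le> Pl (Wn c \<union> - E)" by (rule mono) blast
    ultimately have "Pl (Wn c) < Pl (E - Wn c)" by (rule le_less_trans[rotated])
    with nlt show False by blast
  qed
qed


lemma main:
  fixes Pl :: "'w set \<Rightarrow> 'v::{order_bot,order_top}"
  assumes nb: "Pl UNIV \<noteq> bot"
  and H: "holds Pl FI PI w v (Conj (Lottery Winner) (Crooked Winner))"
  shows "(\<forall>d. Pl {u. \<not> PI u Winner [d]} > Pl {u. PI u Winner [d]})
     \<and> Pl {u. \<exists>d. PI u Winner [d]} > Pl {u. \<not> (\<exists>d. PI u Winner [d])}
     \<and> (\<exists>c. \<forall>d. d \<noteq> c \<longrightarrow> (Pl {u. PI u Winner [d] \<or> PI u Winner [c]} = bot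
           \<or> Pl {u. (PI u Winner [d] \<or> PI u Winner [c]) \<and> PI u Winner [c]} > Pl {u. (PI u Winner [d] \<or> PI u Winner [c]) \<and> \<not> PI u Winner [c]}))"
  using H nb by (simp add: Lottery_def Crooked_def fTrue_def)

theorem proposition5p8:
  fixes Pl :: "'w set \<Rightarrow> 'v::{order_bot,order_top}"
    and FI :: "'w \<Rightarrow> 'f \<Rightarrow> 'd list \<Rightarrow> 'd"
    and PI :: "'w \<Rightarrow> 'p \<Rightarrow> 'd list \<Rightarrow> bool"
    and Winner :: 'p
  assumes "plausibility_measure Pl"
    and "qualitative Pl"
    and "A2dagger Pl"
    and "A3star Pl"
  shows "\<forall>w v. holds Pl FI PI w v
           (Imp (Conj (Lottery Winner) (Crooked Winner)) (Cond fTrue fFalse))"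
proof (intro allI)
  fix w v
  show "holds Pl FI PI w v (Imp (Conj (Lottery Winner) (Crooked Winner)) (Cond fTrue fFalse))"
  proof (cases "Pl UNIV = bot")
    case True
    then show ?thesis by (simp add: fTrue_def fFalse_def)
  next
    case nb: False
    have "\<not> holds Pl FI PI w v (Conj (Lottery Winner) (Crooked Winner))"
    proof
      assume H: "holds Pl FI PI w v (Conj (Lottery Winner) (Crooked Winner))"
      define Wn where "Wn d = {u. PI u Winner [d]}" for d
      from main[OF nb H] obtain c where
        L1: "\<forall>d. Pl {u. \<not> PI u Winner [d]} > Pl {u. PI u Winner [d]}"
        and L2: "Pl {u. \<exists>d. PI u Winner [d]} > Pl {u. \<not> (\<exists>d. PI u Winner [d])}"
        and C: "\<forall>d. d \<noteq> c \<longrightarrow> (Pl {u. PI u Winner [d] \<or> PI u Winner [c]} = bot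
           \<or> Pl {u. (PI u Winner [d] \<or> PI u Winner [c]) \<and> PI u Winner [c]} > Pl {u. (PI u Winner [d] \<or> PI u Winner [c]) \<and> \<not> PI u Winner [c]})"
        by blast
      have e1: "- Wn d = {u. \<not> PI u Winner [d]}" for d unfolding Wn_def by auto
      have e2: "(\<Union>d. Wn d) = {u. \<exists>d. PI u Winner [d]}" unfolding Wn_def by auto
      have e3: "- (\<Union>d. Wn d) = {u. \<not> (\<exists>d. PI u Winner [d])}" unfolding Wn_def by auto
      have e4: "Wn d \<union> Wn c = {u. PI u Winner [d] \<or> PI u Winner [c]}" for d unfolding Wn_def by auto
      have e5: "Wn c = {u. (PI u Winner [d] \<or> PI u Winner [c]) \<and> PI u Winner [c]}" for d unfolding Wn_def by auto
      have e6: "Wn d - Wn c = {u. (PI u Winner [d] \<or> PI u Winner [c]) \<and> \<not> PI u Winner [c]}" for d unfolding Wn_def by auto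
      show False
      proof (rule core[OF assms, of Wn c])
        show "\<forall>d. Pl (Wn d) < Pl (- Wn d)" using L1 unfolding e1 by (simp add: Wn_def)
        show "Pl (- (\<Union>d. Wn d)) < Pl (\<Union>d. Wn d)" using L2 unfolding e2[symmetric] e3[symmetric] .
        show "\<forall>d. d \<noteq> c \<longrightarrow> (Pl (Wn d \<union> Wn c) = bot \<or> Pl (Wn d - Wn c) < Pl (Wn c))"
        proof (intro allI impI)
          fix d assume "d \<noteq> c"
          then show "Pl (Wn d \<union> Wn c) = bot \<or> Pl (Wn d - Wn c) < Pl (Wn c)"
            using C[rule_format, OF \<open>d \<noteq> c\<close>] unfolding e4[symmetric] e6[symmetric] e5[of d, symmetric] by blast
        qed
      qed
    qed
    then show ?thesis by auto
  qed
qed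

end
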